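(* Let $(M,\mathcal{H},\langle\cdot,\cdot\rangle)$ be a quaternionic contact manifold of dimension $4n+3$, locally $\mathcal{H}=\bigcap_{i=1}^3\ker\eta_i$ with associated almost complex structures $I_1,I_2,I_3$ and Reeb vector fields $V_1,V_2,V_3$. Let $\{X_1,\dots,X_{4n},V_1,V_2,V_3\}$ be a local orthonormal frame (for the Riemannian metric $g$) near a point such that $\{X_1,\dots,X_{4n}\}$ is an $Sp(n)Sp(1)$-frame, and let $\{\theta_1,\dots,\theta_{4n},\eta_1,\eta_2,\eta_3\}$ be its dual coframe. Then the Popp measure $\mathcal{P}$ of the subriemannian manifold $(M,\mathcal{H},\langle\cdot,\cdot\rangle)$ is $$\mathcal{P}=\frac{1}{(16n)^{3/2}}\,\theta_1\wedge\cdots\wedge\theta_{4n}\wedge\eta_1\wedge\eta_2\wedge\eta_3 .$$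
   Context: A quaternionic contact (qc) manifold $(M,\mathcal{H},\langle\cdot,\cdot\rangle)$ is a connected orientable manifold of dimension $4n+3$ with a corank-3 distribution $\mathcal{H}$ and a smooth fiberwise inner product $\langle\cdot,\cdot\rangle$ on $\mathcal{H}$ such that locally $\mathcal{H}=\bigcap_{i=1}^3\ker\eta_i$ for 1-forms $\eta_1,\eta_2,\eta_3$, and there are almost complex structures $I_1,I_2,I_3$ on $\mathcal{H}$ with $I_i^2=I_1I_2I_3=-\mathrm{Id}$ and $2\langle I_iX,Y\rangle=d\eta_i(X,Y)$ for horizontal $X,Y$. The Reeb vector fields $V_1,V_2,V_3$ are defined by $\eta_i(V_j)=\delta_{ij}$ and $(V_i\lrcorner d\eta_j)|_{\mathcal{H}}=-(V_j\lrcorner d\eta_i)|_{\mathcal{H}}$ (for $n=1$ their existence is assumed). The Riemannian metric $g$ extends $\langle\cdot,\cdot\rangle$ by $g=\langle\cdot,\cdot\rangle\oplus(\eta_1^2+\eta_2^2+\eta_3^2)$, with $\mathcal{H}\perp\mathrm{span}\{V_i\}$. An $Sp(n)Sp(1)$-frame is an orthonormal frame $\{X_1,\dots,X_{4n}\}$ of $\mathcal{H}$ with $I_iX_{4k+1}=X_{4k+i+1}$ for $k=0,\dots,n-1$, $i=1,2,3$. The Popp measure of a regular step-two subriemannian manifold, expressed in a local frame $\{X_1,\dots,X_{4n},V_1,V_2,V_3\}$ with $X_\alpha$ orthonormal in $\mathcal{H}$ and dual coframe $\{\theta_\alpha,\eta_i\}$, is $\frac{1}{\sqrt{\det B}}\theta_1\wedge\cdots\wedge\theta_{4n}\wedge\eta_1\wedge\eta_2\wedge\eta_3$,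 where $B_{ij}=\sum_{\alpha,\beta}b^i_{\alpha\beta}b^j_{\alpha\beta}$ and $b^i_{\alpha\beta}=\eta_i([X_\alpha,X_\beta])$. *)

theory Defs
  imports "HOL-Analysis.Analysis"
begin

text \<open>Local model: an open set U of a euclidean space of dimension 4n+3 (a chart).
  Vector fields are maps 'a => 'a; a 1-form eta is represented by its Riesz vector field,
  i.e. eta_p(v) = eta p \<bullet> v.\<close>

definition lie_bracket :: "('a::euclidean_space \<Rightarrow> 'a) \<Rightarrow> ('a \<Rightarrow> 'a) \<Rightarrow> 'a \<Rightarrow> 'a" where
  "lie_bracket X Y p = frechet_derivative Y (at p) (X p) - frechet_derivative X (at p) (Y p)"

text \<open>Exterior derivative of a 1-form at p, convention
  d eta (X,Y) = X(eta Y) - Y(eta X) - eta([X,Y]).\<close>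
definition d1form :: "('a::euclidean_space \<Rightarrow> 'a) \<Rightarrow> 'a \<Rightarrow> 'a \<Rightarrow> 'a \<Rightarrow> real" where
  "d1form \<omega> p u v = frechet_derivative \<omega> (at p) u \<bullet> v - frechet_derivative \<omega> (at p) v \<bullet> u"

definition horiz :: "(nat \<Rightarrow> 'a::euclidean_space \<Rightarrow> 'a) \<Rightarrow> 'a \<Rightarrow> 'a set" where
  "horiz \<eta> p = {v. \<forall>i\<in>{1,2,3}. \<eta> i p \<bullet> v = 0}"

definition det_nat :: "nat \<Rightarrow> (nat \<Rightarrow> nat \<Rightarrow> real) \<Rightarrow> real" where
  "det_nat m A = (\<Sum>\<sigma> | \<sigma> permutes {1..m}. of_int (sign \<sigma>) * (\<Prod>i\<in>{1..m}. A i (\<sigma> i)))"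

definition qc_structure ::
  "nat \<Rightarrow> 'a::euclidean_space set \<Rightarrow> (nat \<Rightarrow> 'a \<Rightarrow> 'a) \<Rightarrow> ('a \<Rightarrow> 'a \<Rightarrow> 'a \<Rightarrow> real)
    \<Rightarrow> (nat \<Rightarrow> 'a \<Rightarrow> 'a \<Rightarrow> 'a) \<Rightarrow> (nat \<Rightarrow> 'a \<Rightarrow> 'a) \<Rightarrow> bool" where
  "qc_structure n U \<eta> g I V \<longleftrightarrow>
     n \<ge> 1 \<and> DIM('a) = 4 * n + 3 \<and> open U \<and>
     (\<forall>i\<in>{1,2,3}. \<eta> i differentiable_on U) \<and>
     (\<forall>p\<in>U.
        \<comment> \<open>corank 3: the eta_i are linearly independent\<close>
        independent {\<eta> 1 p, \<eta> 2 p, \<eta> 3 p} \<and> card {\<eta> 1 p, \<eta> 2 p, \<eta> 3 p} = 3 \<and>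
        \<comment> \<open>fiberwise inner product on H_p\<close>
        (\<forall>u\<in>horiz \<eta> p. \<forall>v\<in>horiz \<eta> p. g p u v = g p v u) \<and>
        (\<forall>u\<in>horiz \<eta> p. \<forall>v\<in>horiz \<eta> p. \<forall>w\<in>horiz \<eta> p.
            g p (u + v) w = g p u w + g p v w) \<and>
        (\<forall>u\<in>horiz \<eta> p. \<forall>w\<in>horiz \<eta> p. \<forall>c. g p (c *\<^sub>R u) w = c * g p u w) \<and>
        (\<forall>u\<in>horiz \<eta> p. u \<noteq> 0 \<longrightarrow> g p u u > 0) \<and>
        \<comment> \<open>almost complex structures on H_p\<close>
        (\<forall>i\<in>{1,2,3}. \<forall>u\<in>horiz \<eta> p. I i p u \<in> horiz \<eta> p) \<and>
        (\<forall>i\<in>{1,2,3}. \<forall>u\<in>horiz \<eta> p. \<forall>v\<in>horiz \<eta> p. \<forall>c.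
            I i p (u + v) = I i p u + I i p v \<and> I i p (c *\<^sub>R u) = c *\<^sub>R I i p u) \<and>
        (\<forall>i\<in>{1,2,3}. \<forall>u\<in>horiz \<eta> p. I i p (I i p u) = - u) \<and>
        (\<forall>u\<in>horiz \<eta> p. I 1 p (I 2 p (I 3 p u)) = - u) \<and>
        (\<forall>i\<in>{1,2,3}. \<forall>u\<in>horiz \<eta> p. \<forall>v\<in>horiz \<eta> p.
            2 * g p (I i p u) v = d1form (\<eta> i) p u v) \<and>
        \<comment> \<open>Reeb vector fields\<close>
        (\<forall>i\<in>{1,2,3}. \<forall>j\<in>{1,2,3}. \<eta> i p \<bullet> V j p = (if i = j then 1 else 0)) \<and>
        (\<forall>i\<in>{1,2,3}. \<forall>j\<in>{1,2,3}. \<forall>u\<in>horiz \<eta> p.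
            d1form (\<eta> j) p (V i p) u = - d1form (\<eta> i) p (V j p) u))"

definition spn_sp1_frame ::
  "nat \<Rightarrow> 'a::euclidean_space set \<Rightarrow> (nat \<Rightarrow> 'a \<Rightarrow> 'a) \<Rightarrow> ('a \<Rightarrow> 'a \<Rightarrow> 'a \<Rightarrow> real)
    \<Rightarrow> (nat \<Rightarrow> 'a \<Rightarrow> 'a \<Rightarrow> 'a) \<Rightarrow> (nat \<Rightarrow> 'a \<Rightarrow> 'a) \<Rightarrow> bool" where
  "spn_sp1_frame n U \<eta> g I X \<longleftrightarrow>
     (\<forall>\<alpha>\<in>{1..4*n}. X \<alpha> differentiable_on U) \<and>
     (\<forall>p\<in>U.
        (\<forall>\<alpha>\<in>{1..4*n}. X \<alpha> p \<in> horiz \<eta> p) \<and>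
        (\<forall>\<alpha>\<in>{1..4*n}. \<forall>\<beta>\<in>{1..4*n}. g p (X \<alpha> p) (X \<beta> p) = (if \<alpha> = \<beta> then 1 else 0)) \<and>
        (\<forall>k<n. \<forall>i\<in>{1,2,3}. I i p (X (4*k+1) p) = X (4*k+i+1) p))"

text \<open>Popp measure: coefficient of theta_1 ^ ... ^ theta_4n ^ eta_1 ^ eta_2 ^ eta_3,
  namely 1/sqrt(det B), B_ij = sum b^i_ab b^j_ab, b^i_ab = eta_i([X_a, X_b]).\<close>
definition popp_b :: "(nat \<Rightarrow> 'a::euclidean_space \<Rightarrow> 'a) \<Rightarrow> (nat \<Rightarrow> 'a \<Rightarrow> 'a) \<Rightarrow> 'a \<Rightarrow> nat \<Rightarrow> nat \<Rightarrow> nat \<Rightarrow> real" where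
  "popp_b \<eta> X p i \<alpha> \<beta> = \<eta> i p \<bullet> lie_bracket (X \<alpha>) (X \<beta>) p"

definition popp_B :: "nat \<Rightarrow> (nat \<Rightarrow> 'a::euclidean_space \<Rightarrow> 'a) \<Rightarrow> (nat \<Rightarrow> 'a \<Rightarrow> 'a) \<Rightarrow> 'a \<Rightarrow> nat \<Rightarrow> nat \<Rightarrow> real" where
  "popp_B n \<eta> X p i j = (\<Sum>\<alpha>\<in>{1..4*n}. \<Sum>\<beta>\<in>{1..4*n}. popp_b \<eta> X p i \<alpha> \<beta> * popp_b \<eta> X p j \<alpha> \<beta>)"

definition popp_coeff :: "nat \<Rightarrow> (nat \<Rightarrow> 'a::euclidean_space \<Rightarrow> 'a) \<Rightarrow> (nat \<Rightarrow> 'a \<Rightarrow> 'a) \<Rightarrow> 'a \<Rightarrow> real" where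
  "popp_coeff n \<eta> X p = 1 / sqrt (det_nat 3 (popp_B n \<eta> X p))"

end

theory Submission
  imports Defs
begin

lemma deriv_zero:
  fixes e Y :: "'a::euclidean_space \<Rightarrow> 'a"
  assumes "open U" "p \<in> U" "e differentiable at p" "Y differentiable at p"
    "\<forall>y\<in>U. e y \<bullet> Y y = 0"
  shows "frechet_derivative e (at p) h \<bullet> Y p + e p \<bullet> frechet_derivative Y (at p) h = 0"
proof -
  have d1: "((\<lambda>y. e y \<bullet> Y y) has_derivative
      (\<lambda>h. e p \<bullet> frechet_derivative Y (at p) h + frechet_derivative e (at p) h \<bullet> Y p)) (at p)"
    using assms(3,4) unfolding frechet_derivative_works
    by (intro has_derivative_inner) auto
  have "((\<lambda>y. 0::real) has_derivative (\<lambda>h. 0)) (at p)" by simp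
  then have d2: "((\<lambda>y. e y \<bullet> Y y) has_derivative (\<lambda>h. 0)) (at p)"
    by (rule has_derivative_transform_within_open[OF _ assms(1,2)]) (use assms(5) in auto)
  have "(\<lambda>h. e p \<bullet> frechet_derivative Y (at p) h + frechet_derivative e (at p) h \<bullet> Y p) = (\<lambda>h. 0)"
    using has_derivative_unique[OF d1 d2] .
  then show ?thesis by (metis add.commute)
qed

lemma dim_horiz:
  fixes \<eta> :: "nat \<Rightarrow> 'a::euclidean_space \<Rightarrow> 'a"
  assumes "independent {\<eta> 1 p, \<eta> 2 p, \<eta> 3 p}" "card {\<eta> 1 p, \<eta> 2 p, \<eta> 3 p} = 3"
  shows "dim (horiz \<eta> p) + 3 = DIM('a)"
proof -
  let ?S = "{\<eta> 1 p, \<eta> 2 p, \<eta> 3 p}"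
  have h: "horiz \<eta> p = {y \<in> UNIV. \<forall>x \<in> span ?S. orthogonal x y}"
  proof (safe)
    fix y x assume "y \<in> horiz \<eta> p" "x \<in> span ?S"
    then have y: "\<forall>i\<in>{1,2,3}. \<eta> i p \<bullet> y = 0" and x: "x \<in> span ?S"
      unfolding horiz_def by auto
    have "\<And>z. z \<in> ?S \<Longrightarrow> orthogonal y z"
      using y unfolding orthogonal_def by (auto simp: inner_commute)
    then have "orthogonal y x" by (rule orthogonal_to_span[OF x])
    then show "orthogonal x y" by (simp add: orthogonal_commute)
  next
    fix y assume "\<forall>x \<in> span ?S. orthogonal x y"
    then show "y \<in> horiz \<eta> p" unfolding horiz_def orthogonal_def by (auto intro: span_base)
  qed simp
  have "dim (span ?S) = 3" using assms dim_span_eq_card_independent by metis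
  then show ?thesis using dim_subspace_orthogonal_to_vectors[of "span ?S" UNIV] h by simp
qed


locale galg =
  fixes H :: "'a::euclidean_space set" and G :: "'a \<Rightarrow> 'a \<Rightarrow> real"
    and x :: "nat \<Rightarrow> 'a" and m :: nat
  assumes sub: "subspace H" and dimH: "dim H = m"
    and gsym: "\<And>u v. u \<in> H \<Longrightarrow> v \<in> H \<Longrightarrow> G u v = G v u"
    and gadd: "\<And>u v w. u \<in> H \<Longrightarrow> v \<in> H \<Longrightarrow> w \<in> H \<Longrightarrow> G (u + v) w = G u w + G v w"
    and gscale: "\<And>u w c. u \<in> H \<Longrightarrow> w \<in> H \<Longrightarrow> G (c *\<^sub>R u) w = c * G u w"
    and xH: "\<And>a. a \<in> {1..m} \<Longrightarrow> x a \<in> H"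
    and xon: "\<And>a b. a \<in> {1..m} \<Longrightarrow> b \<in> {1..m} \<Longrightarrow> G (x a) (x b) = (if a = b then 1 else 0)"
begin

lemma g0: "w \<in> H \<Longrightarrow> G 0 w = 0"
  using gscale[of 0 w 0] sub by (simp add: subspace_0)

lemma glin:
  assumes "finite A" "A \<subseteq> {1..m}" "w \<in> H"
  shows "G (\<Sum>a\<in>A. c a *\<^sub>R x a) w = (\<Sum>a\<in>A. c a * G (x a) w)"
  using assms
proof (induction A rule: finite_induct)
  case empty then show ?case using g0 by simp
next
  case (insert a A)
  have "(\<Sum>a\<in>A. c a *\<^sub>R x a) \<in> H"
    using insert xH sub by (intro subspace_sum subspace_scale) auto
  moreover have "c a *\<^sub>R x a \<in> H" using insert xH sub by (intro subspace_scale) auto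
  ultimately show ?case using insert gadd gscale xH by simp
qed

lemma xinj: "inj_on x {1..m}"
  using xon by (intro inj_onI) (metis zero_neq_one)

lemma gcoef:
  assumes "b \<in> {1..m}"
  shows "G (\<Sum>a\<in>{1..m}. c a *\<^sub>R x a) (x b) = c b"
proof -
  have "G (\<Sum>a\<in>{1..m}. c a *\<^sub>R x a) (x b) = (\<Sum>a\<in>{1..m}. c a * G (x a) (x b))"
    using glin[of "{1..m}"] assms xH by simp
  also have "\<dots> = (\<Sum>a\<in>{1..m}. if a = b then c a else 0)"
    using assms xon by (intro sum.cong) auto
  also have "\<dots> = c b" using assms by simp
  finally show ?thesis .
qed

lemma indep: "independent (x ` {1..m})"
  unfolding independent_explicit
proof (intro conjI allI impI ballI)
  show "finite (x ` {1..m})" by simp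
next
  fix c v assume s: "(\<Sum>v\<in>x ` {1..m}. c v *\<^sub>R v) = 0" and v: "v \<in> x ` {1..m}"
  then obtain b where b: "b \<in> {1..m}" "v = x b" by auto
  have "(\<Sum>a\<in>{1..m}. c (x a) *\<^sub>R x a) = 0"
    using s sum.reindex[OF xinj, of "\<lambda>v. c v *\<^sub>R v"] by (simp add: o_def)
  then have "G (\<Sum>a\<in>{1..m}. c (x a) *\<^sub>R x a) (x b) = 0" using g0 xH b by simp
  then show "c v = 0" using gcoef[OF b(1), of "\<lambda>a. c (x a)"] b by simp
qed

lemma spanH: "H \<subseteq> span (x ` {1..m})"
proof -
  have "card (x ` {1..m}) = dim H" using card_image[OF xinj] dimH by simp
  moreover have "x ` {1..m} \<subseteq> H" using xH by auto
  ultimately show ?thesis using card_eq_dim[of "x ` {1..m}" H] indep by auto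
qed

lemma parseval:
  assumes "u \<in> H" "v \<in> H"
  shows "G u v = (\<Sum>b\<in>{1..m}. G u (x b) * G v (x b))"
proof -
  have "u \<in> span (x ` {1..m})" using spanH assms by auto
  then obtain c where "u = (\<Sum>w\<in>x ` {1..m}. c w *\<^sub>R w)"
    using span_finite[of "x ` {1..m}"] by auto
  then have u: "u = (\<Sum>a\<in>{1..m}. c (x a) *\<^sub>R x a)"
    using sum.reindex[OF xinj, of "\<lambda>v. c v *\<^sub>R v"] by (simp add: o_def)
  have "G u v = (\<Sum>a\<in>{1..m}. c (x a) * G (x a) v)"
    using u glin[of "{1..m}" v "\<lambda>a. c (x a)"] assms by simp
  also have "\<dots> = (\<Sum>b\<in>{1..m}. G u (x b) * G v (x b))"
  proof (rule sum.cong)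
    fix a assume a: "a \<in> {1..m}"
    have "G u (x a) = c (x a)" using gcoef[OF a, of "\<lambda>a. c (x a)"] u by simp
    moreover have "G (x a) v = G v (x a)" using gsym xH a assms by auto
    ultimately show "c (x a) * G (x a) v = G u (x a) * G v (x a)" by simp
  qed simp
  finally show ?thesis .
qed

end

locale galgJ = galg +
  fixes J :: "nat \<Rightarrow> 'a::euclidean_space \<Rightarrow> 'a"
  assumes JH: "\<And>i u. i \<in> {1,2,3} \<Longrightarrow> u \<in> H \<Longrightarrow> J i u \<in> H"
    and Jscale: "\<And>i u c. i \<in> {1,2,3} \<Longrightarrow> u \<in> H \<Longrightarrow> J i (c *\<^sub>R u) = c *\<^sub>R J i u"
    and Jsq: "\<And>i u. i \<in> {1,2,3} \<Longrightarrow> u \<in> H \<Longrightarrow> J i (J i u) = - u"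
    and J123: "\<And>u. u \<in> H \<Longrightarrow> J 1 (J 2 (J 3 u)) = - u"
    and Janti: "\<And>i u v. i \<in> {1,2,3} \<Longrightarrow> u \<in> H \<Longrightarrow> v \<in> H \<Longrightarrow> G (J i u) v = - G (J i v) u"
begin

lemma Jneg: "i \<in> {1,2,3} \<Longrightarrow> u \<in> H \<Longrightarrow> J i (- u) = - J i u"
  using Jscale[of i u "-1"] by simp

lemma gneg: "u \<in> H \<Longrightarrow> v \<in> H \<Longrightarrow> G (- u) v = - G u v"
  using gscale[of u v "-1"] by simp

lemma negH: "u \<in> H \<Longrightarrow> - u \<in> H"
  using sub by (simp add: subspace_neg)

lemma J12: assumes "w \<in> H" shows "J 1 (J 2 w) = J 3 w"
proof -
  have h: "J 3 w \<in> H" "J 2 w \<in> H" using JH assms by auto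
  have "J 1 (J 2 (J 3 (J 3 w))) = - J 3 w" using J123[OF h(1)] .
  also have "J 1 (J 2 (J 3 (J 3 w))) = - J 1 (J 2 w)"
    using Jsq[of 3 w] assms Jneg[of 2 w] Jneg[of 1 "J 2 w"] h by simp
  finally show ?thesis by simp
qed

lemma J13: assumes "w \<in> H" shows "J 1 (J 3 w) = - J 2 w"
proof -
  have "J 2 w \<in> H" using JH assms by auto
  then have "J 1 (J 1 (J 2 w)) = - J 2 w" using Jsq[of 1 "J 2 w"] by auto
  then show ?thesis using J12[OF assms] by simp
qed

lemma J32: assumes "w \<in> H" shows "J 3 (J 2 w) = - J 1 w"
  using J12[of "J 2 w"] Jsq[of 2 w] JH assms Jneg[of 1 w] by auto

lemma gJself: "k \<in> {1,2,3} \<Longrightarrow> u \<in> H \<Longrightarrow> G (J k u) u = 0"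
  using Janti[of k u u] by simp

lemma orthJ:
  assumes "i \<in> {1,2,3}" "j \<in> {1,2,3}" "u \<in> H"
  shows "G (J i u) (J j u) = (if i = j then G u u else 0)"
proof -
  have key: "G (J i u) (J j u) = - G (J i (J j u)) u" if "i \<in> {1,2,3}" "j \<in> {1,2,3}" for i j
    using Janti[of i u "J j u"] that assms JH by auto
  have sw: "G (J i u) (J j u) = G (J j u) (J i u)" using gsym JH assms by auto
  have a: "G (J 1 (J 2 u)) u = 0" using J12 gJself assms by auto
  have b: "G (J 1 (J 3 u)) u = 0" using J13 gJself assms gneg JH by auto
  have c: "G (J 3 (J 2 u)) u = 0" using J32 gJself assms gneg JH by auto
  show ?thesis
  proof (cases "i = j")
    case True
    then show ?thesis using key[of i i] assms Jsq gneg by auto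
  next
    case False
    have sw': "G (J i u) (J j u) = G (J j u) (J i u)" if "i \<in> {1,2,3}" "j \<in> {1,2,3}" for i j
      using gsym JH assms that by auto
    have p12: "G (J 1 u) (J 2 u) = 0" using key[of 1 2] a by simp
    have p13: "G (J 1 u) (J 3 u) = 0" using key[of 1 3] b by simp
    have p32: "G (J 3 u) (J 2 u) = 0" using key[of 3 2] c by simp
    have p21: "G (J 2 u) (J 1 u) = 0" using p12 sw'[of 2 1] by simp
    have p31: "G (J 3 u) (J 1 u) = 0" using p13 sw'[of 3 1] by simp
    have p23: "G (J 2 u) (J 3 u) = 0" using p32 sw'[of 2 3] by simp
    from assms(1,2) False p12 p13 p32 p21 p31 p23 show ?thesis by fastforce
  qed
qed

lemma sumJ:
  assumes "i \<in> {1,2,3}" "j \<in> {1,2,3}"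
  shows "(\<Sum>a\<in>{1..m}. \<Sum>b\<in>{1..m}. G (J i (x a)) (x b) * G (J j (x a)) (x b))
     = (if i = j then real m else 0)"
proof -
  have "(\<Sum>a\<in>{1..m}. \<Sum>b\<in>{1..m}. G (J i (x a)) (x b) * G (J j (x a)) (x b))
      = (\<Sum>a\<in>{1..m}. if i = j then 1 else 0)"
  proof (rule sum.cong)
    fix a assume a: "a \<in> {1..m}"
    have "(\<Sum>b\<in>{1..m}. G (J i (x a)) (x b) * G (J j (x a)) (x b)) = G (J i (x a)) (J j (x a))"
      using parseval[of "J i (x a)" "J j (x a)"] JH xH a assms by auto
    also have "\<dots> = (if i = j then 1 else 0)" using orthJ assms xH a xon by auto
    finally show "(\<Sum>b\<in>{1..m}. G (J i (x a)) (x b) * G (J j (x a)) (x b)) = (if i = j then 1 else 0)" .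
  qed simp
  then show ?thesis by simp
qed

end

lemma det_diag:
  assumes "\<forall>i\<in>{1..m}. \<forall>j\<in>{1..m}. A i j = (if i = j then c else 0)"
  shows "det_nat m A = c ^ m"
proof -
  have "det_nat m A = (\<Sum>\<sigma> \<in> {\<sigma>. \<sigma> permutes {1..m}}. if \<sigma> = id then c ^ m else 0)"
    unfolding det_nat_def
  proof (rule sum.cong)
    fix \<sigma> assume s: "\<sigma> \<in> {\<sigma>. \<sigma> permutes {1..m}}"
    show "of_int (sign \<sigma>) * (\<Prod>i\<in>{1..m}. A i (\<sigma> i)) = (if \<sigma> = id then c ^ m else 0)"
    proof (cases "\<sigma> = id")
      case True
      then show ?thesis using assms by (simp add: sign_id)
    next
      case False
      then obtain i where i: "\<sigma> i \<noteq> i" by (metis eq_id_iff)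
      then have "i \<in> {1..m}" using s by (auto simp: permutes_def)
      moreover then have "\<sigma> i \<in> {1..m}" using s permutes_in_image by fastforce
      ultimately have "A i (\<sigma> i) = 0" using assms i by auto
      then have "(\<Prod>i\<in>{1..m}. A i (\<sigma> i)) = 0"
        using \<open>i \<in> {1..m}\<close> by (intro prod_zero) auto
      then show ?thesis using False by simp
    qed
  qed simp
  also have "\<dots> = c ^ m"
    using finite_permutations[of "{1..m}"] permutes_id[of "{1..m}"] by (simp add: sum.delta')
  finally show ?thesis .
qed

lemma sqrt_cube: assumes "(x::real) > 0" shows "sqrt (x ^ 3) = x powr (3/2)"
proof -
  have h1: "sqrt (x ^ 3) = (x ^ 3) powr (1/2)" using powr_half_sqrt[of "x^3"] assms by simp
  have h2: "x ^ 3 = x powr (real 3)" using powr_realpow[of x 3] assms by simp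
  have h3: "(x powr (real 3)) powr (1/2) = x powr (3/2)" by (simp add: powr_powr)
  show ?thesis using h1 h2 h3 by metis
qed


lemma horiz_subspace: "subspace (horiz \<eta> p)"
  unfolding horiz_def subspace_def by (simp add: inner_add_right)

theorem lemma4p1:
  fixes U :: "'a::euclidean_space set"
    and \<eta> V :: "nat \<Rightarrow> 'a \<Rightarrow> 'a"
    and g :: "'a \<Rightarrow> 'a \<Rightarrow> 'a \<Rightarrow> real"
    and I :: "nat \<Rightarrow> 'a \<Rightarrow> 'a \<Rightarrow> 'a"
    and X :: "nat \<Rightarrow> 'a \<Rightarrow> 'a"
    and n :: nat
  assumes "qc_structure n U \<eta> g I V"
    and "spn_sp1_frame n U \<eta> g I X"
  shows "\<forall>p\<in>U. popp_coeff n \<eta> X p = 1 / (16 * real n) powr (3/2)"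
proof
  fix p assume p: "p \<in> U"
  note Q = assms(1)[unfolded qc_structure_def]
  note F = assms(2)[unfolded spn_sp1_frame_def]
  have n1: "n \<ge> 1" by (rule Q[THEN conjunct1])
  have dimA: "DIM('a) = 4*n+3" by (rule Q[THEN conjunct2, THEN conjunct1])
  have oU: "open U" by (rule Q[THEN conjunct2, THEN conjunct2, THEN conjunct1])
  have etad: "\<forall>i\<in>{1,2,3}. \<eta> i differentiable_on U"
    by (rule Q[THEN conjunct2, THEN conjunct2, THEN conjunct2, THEN conjunct1])
  have Qp: "independent {\<eta> 1 p, \<eta> 2 p, \<eta> 3 p} \<and> card {\<eta> 1 p, \<eta> 2 p, \<eta> 3 p} = 3 \<and>
        (\<forall>u\<in>horiz \<eta> p. \<forall>v\<in>horiz \<eta> p. g p u v = g p v u) \<and>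
        (\<forall>u\<in>horiz \<eta> p. \<forall>v\<in>horiz \<eta> p. \<forall>w\<in>horiz \<eta> p.
            g p (u + v) w = g p u w + g p v w) \<and>
        (\<forall>u\<in>horiz \<eta> p. \<forall>w\<in>horiz \<eta> p. \<forall>c. g p (c *\<^sub>R u) w = c * g p u w) \<and>
        (\<forall>u\<in>horiz \<eta> p. u \<noteq> 0 \<longrightarrow> g p u u > 0) \<and>
        (\<forall>i\<in>{1,2,3}. \<forall>u\<in>horiz \<eta> p. I i p u \<in> horiz \<eta> p) \<and>
        (\<forall>i\<in>{1,2,3}. \<forall>u\<in>horiz \<eta> p. \<forall>v\<in>horiz \<eta> p. \<forall>c.
            I i p (u + v) = I i p u + I i p v \<and> I i p (c *\<^sub>R u) = c *\<^sub>R I i p u) \<and>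
        (\<forall>i\<in>{1,2,3}. \<forall>u\<in>horiz \<eta> p. I i p (I i p u) = - u) \<and>
        (\<forall>u\<in>horiz \<eta> p. I 1 p (I 2 p (I 3 p u)) = - u) \<and>
        (\<forall>i\<in>{1,2,3}. \<forall>u\<in>horiz \<eta> p. \<forall>v\<in>horiz \<eta> p.
            2 * g p (I i p u) v = d1form (\<eta> i) p u v)"
    using bspec[OF Q[THEN conjunct2, THEN conjunct2, THEN conjunct2, THEN conjunct2] p]
    apply (elim conjE)
    apply (intro conjI)
    apply assumption+
    done
  have f_H0: "\<forall>q\<in>U. \<forall>\<alpha>\<in>{1..4*n}. X \<alpha> q \<in> horiz \<eta> q"
  proof
    fix q assume "q \<in> U"
    show "\<forall>\<alpha>\<in>{1..4*n}. X \<alpha> q \<in> horiz \<eta> q"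
      by (rule bspec[OF F[THEN conjunct2] \<open>q \<in> U\<close>, THEN conjunct1])
  qed
  have dimH: "dim (horiz \<eta> p) = 4 * n"
    using dim_horiz[of \<eta> p, OF Qp[THEN conjunct1] Qp[THEN conjunct2, THEN conjunct1]] dimA by simp
  have q_d1: "\<forall>i\<in>{1,2,3}. \<forall>u\<in>horiz \<eta> p. \<forall>v\<in>horiz \<eta> p.
            2 * g p (I i p u) v = d1form (\<eta> i) p u v"
    using Qp by (elim conjE) assumption
  have Id1: "\<And>i u v. i \<in> {1,2,3} \<Longrightarrow> u \<in> horiz \<eta> p \<Longrightarrow> v \<in> horiz \<eta> p \<Longrightarrow>
       2 * g p (I i p u) v = d1form (\<eta> i) p u v"
    by (rule q_d1[rule_format])
  have anti: "g p (I i p u) v = - g p (I i p v) u"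
    if "i \<in> {1,2,3}" "u \<in> horiz \<eta> p" "v \<in> horiz \<eta> p" for i u v
  proof -
    have "d1form (\<eta> i) p u v = - d1form (\<eta> i) p v u" unfolding d1form_def
      by (simp add: inner_commute)
    moreover have "2 * g p (I i p u) v = d1form (\<eta> i) p u v" using Id1[OF that] .
    moreover have "2 * g p (I i p v) u = d1form (\<eta> i) p v u" using Id1[OF that(1) that(3) that(2)] .
    ultimately show ?thesis by linarith
  qed
  have q_sym: "\<forall>u\<in>horiz \<eta> p. \<forall>v\<in>horiz \<eta> p. g p u v = g p v u"
    using Qp by (elim conjE) assumption
  have q_add: "\<forall>u\<in>horiz \<eta> p. \<forall>v\<in>horiz \<eta> p. \<forall>w\<in>horiz \<eta> p.
            g p (u + v) w = g p u w + g p v w"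
    using Qp by (elim conjE) assumption
  have q_scale: "\<forall>u\<in>horiz \<eta> p. \<forall>w\<in>horiz \<eta> p. \<forall>c. g p (c *\<^sub>R u) w = c * g p u w"
    using Qp by (elim conjE) assumption
  have q_IH: "\<forall>i\<in>{1,2,3}. \<forall>u\<in>horiz \<eta> p. I i p u \<in> horiz \<eta> p"
    using Qp by (elim conjE) assumption
  have q_lin: "\<forall>i\<in>{1,2,3}. \<forall>u\<in>horiz \<eta> p. \<forall>v\<in>horiz \<eta> p. \<forall>c.
            I i p (u + v) = I i p u + I i p v \<and> I i p (c *\<^sub>R u) = c *\<^sub>R I i p u"
    using Qp by (elim conjE) assumption
  have q_sq: "\<forall>i\<in>{1,2,3}. \<forall>u\<in>horiz \<eta> p. I i p (I i p u) = - u"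
    using Qp by (elim conjE) assumption
  have q_123: "\<forall>u\<in>horiz \<eta> p. I 1 p (I 2 p (I 3 p u)) = - u"
    using Qp by (elim conjE) assumption
  note f_H = f_H0
  have f_on: "\<forall>\<alpha>\<in>{1..4*n}. \<forall>\<beta>\<in>{1..4*n}. g p (X \<alpha> p) (X \<beta> p) = (if \<alpha> = \<beta> then 1 else 0)"
    by (rule bspec[OF F[THEN conjunct2] p, THEN conjunct2, THEN conjunct1])
  have f_d: "\<forall>\<alpha>\<in>{1..4*n}. X \<alpha> differentiable_on U"
    by (rule F[THEN conjunct1])
  have xHp: "\<And>a. a \<in> {1..4*n} \<Longrightarrow> X a p \<in> horiz \<eta> p" using f_H[rule_format, OF p] .
  have sc: "\<And>i u c. i \<in> {1,2,3} \<Longrightarrow> u \<in> horiz \<eta> p \<Longrightarrow> I i p (c *\<^sub>R u) = c *\<^sub>R I i p u"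
  proof -
    fix i :: nat and u :: 'a and c :: real assume a1: "i \<in> {1,2,3}" and a2: "u \<in> horiz \<eta> p"
    show "I i p (c *\<^sub>R u) = c *\<^sub>R I i p u"
      by (rule q_lin[rule_format, OF a1 a2 a2, of c, THEN conjunct2])
  qed
  interpret galgJ "horiz \<eta> p" "g p" "\<lambda>a. X a p" "4*n" "\<lambda>i. I i p"
  proof (intro galgJ.intro galg.intro galgJ_axioms.intro)
    show "subspace (horiz \<eta> p)" by (rule horiz_subspace)
    show "dim (horiz \<eta> p) = 4 * n" by (rule dimH)
    show "\<And>u v. u \<in> horiz \<eta> p \<Longrightarrow> v \<in> horiz \<eta> p \<Longrightarrow> g p u v = g p v u"
      by (rule q_sym[rule_format])
    show "\<And>u v w. u \<in> horiz \<eta> p \<Longrightarrow> v \<in> horiz \<eta> p \<Longrightarrow> w \<in> horiz \<eta> p \<Longrightarrow>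
        g p (u + v) w = g p u w + g p v w"
      by (rule q_add[rule_format])
    show "\<And>u w c. u \<in> horiz \<eta> p \<Longrightarrow> w \<in> horiz \<eta> p \<Longrightarrow> g p (c *\<^sub>R u) w = c * g p u w"
      by (rule q_scale[rule_format])
    show "\<And>a. a \<in> {1..4*n} \<Longrightarrow> X a p \<in> horiz \<eta> p" by (rule xHp)
    show "\<And>a b. a \<in> {1..4*n} \<Longrightarrow> b \<in> {1..4*n} \<Longrightarrow> g p (X a p) (X b p) = (if a = b then 1 else 0)"
      by (rule f_on[rule_format])
    show "\<And>i u. i \<in> {1,2,3} \<Longrightarrow> u \<in> horiz \<eta> p \<Longrightarrow> I i p u \<in> horiz \<eta> p"
      by (rule q_IH[rule_format])
    show "\<And>i u c. i \<in> {1,2,3} \<Longrightarrow> u \<in> horiz \<eta> p \<Longrightarrow> I i p (c *\<^sub>R u) = c *\<^sub>R I i p u"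
      by (rule sc)
    show "\<And>i u. i \<in> {1,2,3} \<Longrightarrow> u \<in> horiz \<eta> p \<Longrightarrow> I i p (I i p u) = - u"
      by (rule q_sq[rule_format])
    show "\<And>u. u \<in> horiz \<eta> p \<Longrightarrow> I 1 p (I 2 p (I 3 p u)) = - u"
      by (rule q_123[rule_format])
    show "\<And>i u v. i \<in> {1,2,3} \<Longrightarrow> u \<in> horiz \<eta> p \<Longrightarrow> v \<in> horiz \<eta> p \<Longrightarrow>
        g p (I i p u) v = - g p (I i p v) u"
      by (rule anti)
  qed
  have bval: "popp_b \<eta> X p i a b = - 2 * g p (I i p (X a p)) (X b p)"
    if i: "i \<in> {1,2,3}" and a: "a \<in> {1..4*n}" and b: "b \<in> {1..4*n}" for i a b
  proof -
    have ed: "\<eta> i differentiable at p"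
      using etad i oU p differentiable_on_eq_differentiable_at by blast
    have Xd: "X c differentiable at p" if "c \<in> {1..4*n}" for c
      using f_d that oU p differentiable_on_eq_differentiable_at by blast
    have z: "\<forall>y\<in>U. \<eta> i y \<bullet> X c y = 0" if "c \<in> {1..4*n}" for c
      using f_H that i unfolding horiz_def by blast
    have e1: "frechet_derivative (\<eta> i) (at p) (X a p) \<bullet> X b p
        + \<eta> i p \<bullet> frechet_derivative (X b) (at p) (X a p) = 0"
      by (rule deriv_zero[OF oU p ed Xd[OF b] z[OF b]])
    have e2: "frechet_derivative (\<eta> i) (at p) (X b p) \<bullet> X a p
        + \<eta> i p \<bullet> frechet_derivative (X a) (at p) (X b p) = 0"
      by (rule deriv_zero[OF oU p ed Xd[OF a] z[OF a]])
    have "popp_b \<eta> X p i a b = - d1form (\<eta> i) p (X a p) (X b p)"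
      unfolding popp_b_def lie_bracket_def d1form_def using e1 e2
      by (simp add: inner_diff_right)
    also have "\<dots> = - 2 * g p (I i p (X a p)) (X b p)"
      using Id1[OF i, of "X a p" "X b p"] xHp a b by simp
    finally show ?thesis .
  qed
  have Bval: "popp_B n \<eta> X p i j = (if i = j then 16 * real n else 0)"
    if "i \<in> {1..3}" "j \<in> {1..3}" for i j
  proof -
    have ij: "i \<in> {1,2,3}" "j \<in> {1,2,3}" using that by auto
    have "popp_B n \<eta> X p i j = (\<Sum>a\<in>{1..4*n}. \<Sum>b\<in>{1..4*n}.
        4 * (g p (I i p (X a p)) (X b p) * g p (I j p (X a p)) (X b p)))"
      unfolding popp_B_def by (intro sum.cong refl) (simp add: bval[OF ij(1)] bval[OF ij(2)])
    also have "\<dots> = 4 * (\<Sum>a\<in>{1..4*n}. \<Sum>b\<in>{1..4*n}.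
        g p (I i p (X a p)) (X b p) * g p (I j p (X a p)) (X b p))"
      by (simp add: sum_distrib_left)
    also have "\<dots> = (if i = j then 16 * real n else 0)"
      using sumJ[OF ij] by simp
    finally show ?thesis .
  qed
  have dt: "det_nat 3 (popp_B n \<eta> X p) = (16 * real n) ^ 3"
    by (rule det_diag) (use Bval in auto)
  have "16 * real n > 0" using n1 by simp
  then have sq: "sqrt ((16 * real n) ^ 3) = (16 * real n) powr (3/2)" by (rule sqrt_cube)
  show "popp_coeff n \<eta> X p = 1 / (16 * real n) powr (3/2)"
    unfolding popp_coeff_def by (simp only: dt sq)
qed

end
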